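(* Let $V(x,y)=V_0(x)I_2$ with $V_0$ real-valued, integrable and compactly supported, and $\hat V_0(\xi)=\int V_0(x)e^{-i\xi x}dx$. For $E\in\mathbb R$ and $m=(n,\epsilon_m),p=(q,\epsilon_p)\in M(E)$: (i) if $n\ne q$ then $\hat S^{\mathrm{lin}}_{m,p}(E)=0$; (ii) $\hat S^{\mathrm{lin}}_{m,m}(E)=\frac{iE}{\sqrt{E^2-2n}}\hat V_0(0)$; (iii) if $n=q\ge1$, $E>\sqrt{2n}$ and $\epsilon_m\ne\epsilon_p$, then $\int\overline{\phi_m(y;E)}^T\phi_p(y;E)dy=\sqrt{2n}/E\ne0$ and $\xi_m(E)-\xi_p(E)=\pm2\sqrt{E^2-2n}$, so $\hat S^{\mathrm{lin}}_{n+,n-}(E)=\frac{i\sqrt{2n}}{\sqrt{E^2-2n}}\hat V_0(2\sqrt{E^2-2n})$ and $\hat S^{\mathrm{lin}}_{n-,n+}(E)=\frac{i\sqrt{2n}}{\sqrt{E^2-2n}}\hat V_0(-2\sqrt{E^2-2n})$. Consequently, the transmission data $\{\hat S^{\mathrm{lin}}_{m,m}(E)\}$ determine only $\hat V_0(0)=\int V_0$, while the reflection data $\{\hat S^{\mathrm{lin}}_{n\pm,n\mp}(E):E>\sqrt{2n}\}$ for any fixed $n\ge1$ determine $\hat V_0(\xi)$ for every $\xi\neq0$.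
   Context: Hermite functions $\varphi_n(y)=(2^nn!\sqrt\pi)^{-1/2}H_n(y)e^{-y^2/2}$. Modes: $M=\{(n,\pm1):n\ge1\}\cup\{(0,-1)\}$, written $n\pm$; $M(E)=\{(n,\epsilon)\in M:E^2>2n\}$. For $m=(n,\epsilon_m)$, $n\ge1$: $\xi_m(E)=\epsilon_m\sqrt{E^2-2n}$, $\phi_m(y;E)=c_m(\sqrt{2n}\varphi_{n-1},(E-\xi_m)\varphi_n)^T$, $c_m=(2n+|E-\xi_m|^2)^{-1/2}$; for $m=(0,-1)$: $\xi_m=-E$, $\phi_m=(0,\varphi_0)^T$. Linearized scattering coefficients of a bounded compactly supported Hermitian $V$: $\hat S^{\mathrm{lin}}_{m,p}(E)=\frac{iE}{\sqrt{E^2-2q}}\iint e^{-i(\xi_m(E)-\xi_p(E))x}\overline{\phi_m(y;E)}^TV(x,y)\phi_p(y;E)\,dy\,dx$ for $p=(q,\epsilon_p)$. *)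

theory Defs
  imports "HOL-Analysis.Analysis"
begin

fun hermite_poly :: "nat \<Rightarrow> real \<Rightarrow> real" where
  "hermite_poly 0 y = 1"
| "hermite_poly (Suc 0) y = 2 * y"
| "hermite_poly (Suc (Suc n)) y = 2 * y * hermite_poly (Suc n) y - 2 * real (Suc n) * hermite_poly n y"

definition hermite_fun :: "nat \<Rightarrow> real \<Rightarrow> real" where
  "hermite_fun n y = (2 ^ n * fact n * sqrt pi) powr (-1/2) * hermite_poly n y * exp (- (y\<^sup>2) / 2)"

type_synonym mode = "nat \<times> int"

definition modes :: "mode set" where
  "modes = {(n, e). n \<ge> 1 \<and> (e = 1 \<or> e = -1)} \<union> {(0, -1)}"

definition modes_E :: "real \<Rightarrow> mode set" where
  "modes_E E = {m \<in> modes. E\<^sup>2 > 2 * real (fst m)}"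

definition xi :: "mode \<Rightarrow> real \<Rightarrow> real" where
  "xi m E = (if fst m = 0 then - E else real_of_int (snd m) * sqrt (E\<^sup>2 - 2 * real (fst m)))"

definition vec2 :: "complex \<Rightarrow> complex \<Rightarrow> complex ^ 2" where
  "vec2 a b = (\<chi> i. if i = 1 then a else b)"

definition phi :: "mode \<Rightarrow> real \<Rightarrow> real \<Rightarrow> complex ^ 2" where
  "phi m E y =
     (if fst m = 0 then vec2 0 (complex_of_real (hermite_fun 0 y))
      else (let n = fst m; c = (2 * real n + \<bar>E - xi m E\<bar>\<^sup>2) powr (-1/2) in
            vec2 (complex_of_real (c * sqrt (2 * real n) * hermite_fun (n - 1) y))
                 (complex_of_real (c * (E - xi m E) * hermite_fun n y))))"

definition cdot2 :: "complex ^ 2 \<Rightarrow> complex ^ 2 \<Rightarrow> complex" where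
  "cdot2 u w = (\<Sum>i\<in>UNIV. cnj (u $ i) * w $ i)"

definition S_lin :: "(real \<Rightarrow> real \<Rightarrow> complex ^ 2 ^ 2) \<Rightarrow> real \<Rightarrow> mode \<Rightarrow> mode \<Rightarrow> complex" where
  "S_lin V E m p =
     \<i> * complex_of_real E / complex_of_real (sqrt (E\<^sup>2 - 2 * real (fst p))) *
     (LINT x|lborel. LINT y|lborel.
        exp (- \<i> * complex_of_real ((xi m E - xi p E) * x)) * cdot2 (phi m E y) (V x y *v phi p E y))"

definition scalar_pot :: "(real \<Rightarrow> real) \<Rightarrow> real \<Rightarrow> real \<Rightarrow> complex ^ 2 ^ 2" where
  "scalar_pot V0 x y = mat (complex_of_real (V0 x))"

definition fourier :: "(real \<Rightarrow> real) \<Rightarrow> real \<Rightarrow> complex" where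
  "fourier V0 \<xi> = (LINT x|lborel. complex_of_real (V0 x) * exp (- \<i> * complex_of_real (\<xi> * x)))"

definition admissible :: "(real \<Rightarrow> real) \<Rightarrow> bool" where
  "admissible V0 \<longleftrightarrow> integrable lborel V0 \<and> (\<exists>R. \<forall>x. \<bar>x\<bar> > R \<longrightarrow> V0 x = 0)"

end

theory Submission
  imports Defs "HOL-Probability.Distributions" "HOL-Real_Asymp.Real_Asymp"
begin

abbreviation H where "H \<equiv> hermite_poly"

lemma H_rec: "H (Suc n) y = 2 * y * H n y - 2 * real n * H (n - 1) y"
  by (cases n) auto

lemma H_deriv: "DERIV (H n) y :> 2 * real n * H (n - 1) y"
proof (induction n y rule: hermite_poly.induct)
  case (1 y) then show ?case by (auto intro!: derivative_eq_intros)
next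
  case (2 y) then show ?case by (auto intro!: derivative_eq_intros)
next
  case (3 n y)
  have D: "DERIV (\<lambda>y. 2 * y * H (Suc n) y - 2 * real (Suc n) * H n y) y :>
     2 * H (Suc n) y + 2 * y * (2 * real (Suc n) * H n y) - 2 * real (Suc n) * (2 * real n * H (n - 1) y)"
    using 3 by (auto intro!: derivative_eq_intros simp: algebra_simps)
  have h: "H (Suc n) y = 2 * y * H n y - 2 * real n * H (n - 1) y" by (rule H_rec)
  have "2 * H (Suc n) y + 2 * y * (2 * real (Suc n) * H n y) - 2 * real (Suc n) * (2 * real n * H (n - 1) y)
     = 2 * real (Suc (Suc n)) * H (Suc n) y"
    unfolding h by (simp add: algebra_simps)
  with D show ?case by simp
qed

lemma H_cont[continuous_intros]: "isCont (H n) y"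
  using H_deriv DERIV_isCont by blast

definition good :: "(real \<Rightarrow> real) \<Rightarrow> bool" where
  "good f \<longleftrightarrow> integrable lborel (\<lambda>y. f y * exp (- y\<^sup>2)) \<and>
     ((\<lambda>y. f y * exp (- y\<^sup>2)) \<longlongrightarrow> 0) at_top \<and> ((\<lambda>y. f y * exp (- y\<^sup>2)) \<longlongrightarrow> 0) at_bot"

lemma gauss_nd: "exp (- y\<^sup>2) = sqrt pi * normal_density 0 (sqrt (1/2)) y"
  by (simp add: normal_density_def power2_eq_square)

lemma good_pow: "good (\<lambda>y. y ^ k)"
proof -
  have i1: "integrable lborel (\<lambda>y. sqrt pi * (normal_density 0 (sqrt (1/2)) y * (y - 0) ^ k))"
    by (intro integrable_mult_right integrable_normal_moment) simp
  have e1: "(\<lambda>y::real. sqrt pi * (normal_density 0 (sqrt (1/2)) y * (y - 0) ^ k)) = (\<lambda>y. y ^ k * exp (- y\<^sup>2))"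
    by (intro ext) (simp add: normal_density_def power2_eq_square)
  have "integrable lborel (\<lambda>y::real. y ^ k * exp (- y\<^sup>2))"
    using i1 unfolding e1 .
  moreover have "((\<lambda>y::real. y ^ k * exp (- y\<^sup>2)) \<longlongrightarrow> 0) at_top" by real_asymp
  moreover have "((\<lambda>y::real. y ^ k * exp (- y\<^sup>2)) \<longlongrightarrow> 0) at_bot" by real_asymp
  ultimately show ?thesis unfolding good_def by blast
qed

lemma good_lin: "good f \<Longrightarrow> good g \<Longrightarrow> good (\<lambda>y. a * f y - b * g y)"
proof -
  assume f: "good f" and g: "good g"
  have e: "(\<lambda>y. (a * f y - b * g y) * exp (- y\<^sup>2)) = (\<lambda>y. a * (f y * exp (- y\<^sup>2)) - b * (g y * exp (- y\<^sup>2)))"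
    by (auto simp: algebra_simps)
  have t1: "((\<lambda>y. a * (f y * exp (- y\<^sup>2)) - b * (g y * exp (- y\<^sup>2))) \<longlongrightarrow> a * 0 - b * 0) at_top"
    using f g unfolding good_def by (intro tendsto_diff tendsto_mult_left) auto
  have t2: "((\<lambda>y. a * (f y * exp (- y\<^sup>2)) - b * (g y * exp (- y\<^sup>2))) \<longlongrightarrow> a * 0 - b * 0) at_bot"
    using f g unfolding good_def by (intro tendsto_diff tendsto_mult_left) auto
  show ?thesis using f g t1 t2 unfolding good_def e
    by (auto intro!: integrable_diff integrable_mult_right)
qed

lemma good_cong: "good f \<Longrightarrow> (\<And>y. f y = g y) \<Longrightarrow> good g"
  by (metis ext)

lemma good_H: "good (\<lambda>y. y ^ k * H n y)"
proof (induction n arbitrary: k rule: less_induct)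
  case (less n)
  show ?case
  proof (cases n)
    case 0 then show ?thesis using good_pow[of k] by simp
  next
    case (Suc m)
    show ?thesis
    proof (cases m)
      case 0 then show ?thesis using Suc good_lin[OF good_pow[of "Suc k"] good_pow[of k], of 2 0]
        by (simp add: mult_ac)
    next
      case (Suc l)
      have g1: "good (\<lambda>y. y ^ Suc k * H (Suc l) y)" by (rule less.IH) (use \<open>n = Suc m\<close> Suc in simp)
      have g2: "good (\<lambda>y. y ^ k * H l y)" by (rule less.IH) (use \<open>n = Suc m\<close> Suc in simp)
      have "good (\<lambda>y. 2 * (y ^ Suc k * H (Suc l) y) - 2 * real (Suc l) * (y ^ k * H l y))"
        by (rule good_lin[OF g1 g2])
      then show ?thesis by (rule good_cong) (use \<open>n = Suc m\<close> Suc in \<open>auto simp: algebra_simps\<close>)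
    qed
  qed
qed

lemma good_HH: "good (\<lambda>y. y ^ k * H j y * H n y)"
proof (induction j arbitrary: k rule: less_induct)
  case (less j)
  show ?case
  proof (cases j)
    case 0 then show ?thesis using good_H[of k n] by simp
  next
    case (Suc m)
    show ?thesis
    proof (cases m)
      case 0 then show ?thesis using Suc good_lin[OF good_H[of "Suc k" n] good_H[of k n], of 2 0]
        by (simp add: mult_ac)
    next
      case (Suc l)
      have g1: "good (\<lambda>y. y ^ Suc k * H (Suc l) y * H n y)" by (rule less.IH) (use \<open>j = Suc m\<close> Suc in simp)
      have g2: "good (\<lambda>y. y ^ k * H l y * H n y)" by (rule less.IH) (use \<open>j = Suc m\<close> Suc in simp)
      have "good (\<lambda>y. 2 * (y ^ Suc k * H (Suc l) y * H n y) - 2 * real (Suc l) * (y ^ k * H l y * H n y))"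
        by (rule good_lin[OF g1 g2])
      then show ?thesis by (rule good_cong) (use \<open>j = Suc m\<close> Suc in \<open>auto simp: algebra_simps\<close>)
    qed
  qed
qed

lemma good_HH0: "good (\<lambda>y. H j y * H n y)"
  using good_HH[of 0 j n] by simp

lemma integral_deriv_zero:
  fixes F f :: "real \<Rightarrow> real"
  assumes D: "\<And>x. DERIV F x :> f x" and C: "\<And>x. isCont f x" and I: "integrable lborel f"
    and T: "(F \<longlongrightarrow> 0) at_top" and B: "(F \<longlongrightarrow> 0) at_bot"
  shows "integral\<^sup>L lborel f = 0"
proof -
  have "(LBINT x=-\<infinity>..\<infinity>. f x) = 0 - 0"
  proof (rule interval_integral_FTC_integrable[where F=F])
    show "-\<infinity> < (\<infinity>::ereal)" by simp
    show "(F has_vector_derivative f x) (at x)" for x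
      using D has_real_derivative_iff_has_vector_derivative by blast
    show "isCont f x" for x by (rule C)
    show "set_integrable lborel (einterval (-\<infinity>) \<infinity>) f" using I by (simp add: set_integrable_def)
    show "((F \<circ> real_of_ereal) \<longlongrightarrow> 0) (at_right (-\<infinity>))"
      unfolding at_right_MInf filterlim_filtermap using B by (simp add: o_def)
    show "((F \<circ> real_of_ereal) \<longlongrightarrow> 0) (at_left \<infinity>)"
      unfolding at_left_PInf filterlim_filtermap using T by (simp add: o_def)
  qed
  then show ?thesis by (simp add: interval_lebesgue_integral_def set_lebesgue_integral_def)
qed

definition II :: "nat \<Rightarrow> nat \<Rightarrow> real" where
  "II j k = integral\<^sup>L lborel (\<lambda>y. H j y * H k y * exp (- y\<^sup>2))"

lemma II_integrable: "integrable lborel (\<lambda>y. H j y * H k y * exp (- y\<^sup>2))"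
  using good_HH0[of j k] unfolding good_def by blast

lemma II_sym: "II j k = II k j"
  unfolding II_def by (simp add: mult_ac)

lemma II_step: "II j (Suc k) = 2 * real j * II (j - 1) k"
proof -
  let ?F = "\<lambda>y. H j y * H k y * exp (- y\<^sup>2)"
  let ?f = "\<lambda>y. 2 * real j * (H (j - 1) y * H k y * exp (- y\<^sup>2)) - H j y * H (Suc k) y * exp (- y\<^sup>2)"
  have "integral\<^sup>L lborel ?f = 0"
  proof (rule integral_deriv_zero[where F = ?F])
    fix x
    have D: "DERIV ?F x :> (2 * real j * H (j - 1) x * H k x + H j x * (2 * real k * H (k - 1) x)) * exp (- x\<^sup>2)
        + H j x * H k x * (exp (- x\<^sup>2) * (- (2 * x)))"
      by (rule derivative_eq_intros H_deriv refl)+ (simp add: algebra_simps)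
    have h: "H (Suc k) x = 2 * x * H k x - 2 * real k * H (k - 1) x" by (rule H_rec)
    show "DERIV ?F x :> ?f x" using D unfolding h by (simp add: algebra_simps)
    show "isCont ?f x" by (intro continuous_intros)
  next
    show "integrable lborel ?f"
      by (rule Bochner_Integration.integrable_diff[OF integrable_mult_right[OF II_integrable] II_integrable])
    show "(?F \<longlongrightarrow> 0) at_top" "(?F \<longlongrightarrow> 0) at_bot"
      using good_HH0[of j k] unfolding good_def by auto
  qed
  moreover have "integral\<^sup>L lborel ?f = 2 * real j * II (j - 1) k - II j (Suc k)"
    unfolding II_def
    by (subst Bochner_Integration.integral_diff[OF integrable_mult_right[OF II_integrable] II_integrable]) simp
  ultimately show ?thesis by simp
qed

lemma gauss_int: "integral\<^sup>L lborel (\<lambda>y. exp (- y\<^sup>2)) = sqrt pi"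
proof -
  have "(\<lambda>y. exp (- y\<^sup>2)) = (\<lambda>y. sqrt pi * normal_density 0 (sqrt (1/2)) y)"
    by (intro ext) (simp add: normal_density_def power2_eq_square)
  moreover have "integral\<^sup>L lborel (normal_density 0 (sqrt (1/2))) = 1"
    by (intro integral_normal_density) simp
  ultimately show ?thesis by (simp only: integral_mult_right_zero mult_1_right)
qed

lemma II_formula: "II j k = (if j = k then 2 ^ k * fact k * sqrt pi else 0)"
proof (induction k arbitrary: j)
  case 0
  show ?case
  proof (cases j)
    case 0 then show ?thesis using gauss_int by (simp add: II_def)
  next
    case (Suc j') then show ?thesis using II_sym[of j 0] II_step[of 0 j'] by simp
  qed
next
  case (Suc k)
  show ?case
  proof (cases j)
    case 0 then show ?thesis using II_step[of 0 k] by simp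
  next
    case (Suc j') then show ?thesis using II_step[of j k] Suc.IH[of j'] by simp
  qed
qed

definition NN :: "nat \<Rightarrow> real" where
  "NN n = (2 ^ n * fact n * sqrt pi) powr (-1/2)"

lemma hf_prod: "hermite_fun j y * hermite_fun k y = NN j * NN k * (H j y * H k y * exp (- y\<^sup>2))"
proof -
  have e: "exp (- y\<^sup>2 / 2) * exp (- y\<^sup>2 / 2) = exp (- y\<^sup>2)" by (simp flip: exp_add)
  have "hermite_fun j y * hermite_fun k y = NN j * NN k * (H j y * H k y * (exp (- y\<^sup>2 / 2) * exp (- y\<^sup>2 / 2)))"
    unfolding hermite_fun_def NN_def by (simp only: mult_ac)
  then show ?thesis unfolding e .
qed

lemma hf_integrable: "integrable lborel (\<lambda>y. hermite_fun j y * hermite_fun k y)"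
  unfolding hf_prod by (intro integrable_mult_right II_integrable)

lemma NN_sq: "NN k * NN k * (2 ^ k * fact k * sqrt pi) = 1"
proof -
  have pos: "(0::real) < 2 ^ k * fact k * sqrt pi" by simp
  have "NN k * NN k = (2 ^ k * fact k * sqrt pi) powr (-1)"
    unfolding NN_def by (simp flip: powr_add)
  then show ?thesis using pos by (simp add: powr_minus field_simps)
qed

lemma hf_orth: "integral\<^sup>L lborel (\<lambda>y. hermite_fun j y * hermite_fun k y) = (if j = k then 1 else 0)"
proof -
  have "integral\<^sup>L lborel (\<lambda>y. hermite_fun j y * hermite_fun k y) = NN j * NN k * II j k"
    unfolding hf_prod II_def by (rule integral_mult_right_zero)
  then show ?thesis using NN_sq[of k] by (simp add: II_formula)
qed

abbreviation hf where "hf \<equiv> hermite_fun"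

definition cc :: "mode \<Rightarrow> real \<Rightarrow> real" where
  "cc m E = (2 * real (fst m) + \<bar>E - xi m E\<bar>\<^sup>2) powr (-1/2)"

definition AA :: "mode \<Rightarrow> real \<Rightarrow> real" where
  "AA m E = (if fst m = 0 then 0 else cc m E * sqrt (2 * real (fst m)))"

definition BB :: "mode \<Rightarrow> real \<Rightarrow> real" where
  "BB m E = (if fst m = 0 then 1 else cc m E * (E - xi m E))"

lemma phi_eq: "phi m E y = vec2 (of_real (AA m E * hf (fst m - 1) y)) (of_real (BB m E * hf (fst m) y))"
  unfolding phi_def AA_def BB_def cc_def Let_def by (simp add: mult_ac)

lemma vec2_nth [simp]: "vec2 a b $ 1 = a" "vec2 a b $ 2 = b"
  unfolding vec2_def by auto

lemma cdot2_vec2: "cdot2 (vec2 a b) (vec2 c d) = cnj a * c + cnj b * d"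
  unfolding cdot2_def sum_2 by simp

lemma cdot2_phi: "cdot2 (phi m E y) (phi p E y) =
   of_real (AA m E * AA p E * (hf (fst m - 1) y * hf (fst p - 1) y) + BB m E * BB p E * (hf (fst m) y * hf (fst p) y))"
  unfolding phi_eq cdot2_vec2 by (simp add: mult_ac)

definition CC :: "mode \<Rightarrow> mode \<Rightarrow> real \<Rightarrow> complex" where
  "CC m p E = (LINT y|lborel. cdot2 (phi m E y) (phi p E y))"

lemma CC_eq: "CC m p E = of_real (AA m E * AA p E * (if fst m - 1 = fst p - 1 then 1 else 0)
    + BB m E * BB p E * (if fst m = fst p then 1 else 0))"
proof -
  have "CC m p E = of_real (LINT y|lborel. AA m E * AA p E * (hf (fst m - 1) y * hf (fst p - 1) y) + BB m E * BB p E * (hf (fst m) y * hf (fst p) y))"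
    unfolding CC_def cdot2_phi by (rule integral_complex_of_real)
  also have "(LINT y|lborel. AA m E * AA p E * (hf (fst m - 1) y * hf (fst p - 1) y) + BB m E * BB p E * (hf (fst m) y * hf (fst p) y))
     = AA m E * AA p E * (LINT y|lborel. hf (fst m - 1) y * hf (fst p - 1) y) + BB m E * BB p E * (LINT y|lborel. hf (fst m) y * hf (fst p) y)"
    by (subst Bochner_Integration.integral_add[OF integrable_mult_right[OF hf_integrable] integrable_mult_right[OF hf_integrable]])
       (simp only: integral_mult_right_zero)
  finally show ?thesis by (simp only: hf_orth)
qed

lemma cdot2_mat: "cdot2 u (mat c *v w) = c * cdot2 u w"
  unfolding cdot2_def matrix_vector_mult_def mat_def sum_2 by (simp add: algebra_simps)

lemma S_lin_eq: "S_lin (scalar_pot V0) E m p =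
   \<i> * complex_of_real E / complex_of_real (sqrt (E\<^sup>2 - 2 * real (fst p))) * (fourier V0 (xi m E - xi p E) * CC m p E)"
proof -
  let ?e = "\<lambda>x. exp (- \<i> * complex_of_real ((xi m E - xi p E) * x))"
  have "(LINT x|lborel. LINT y|lborel. ?e x * cdot2 (phi m E y) (scalar_pot V0 x y *v phi p E y))
      = (LINT x|lborel. (complex_of_real (V0 x) * ?e x) * CC m p E)"
    unfolding scalar_pot_def cdot2_mat CC_def
    by (rule Bochner_Integration.integral_cong[OF refl]) (simp add: mult_ac)
  also have "\<dots> = fourier V0 (xi m E - xi p E) * CC m p E"
    unfolding fourier_def by (rule integral_mult_left_zero)
  finally show ?thesis unfolding S_lin_def by simp
qed

lemma powr_mhalf: "0 < (x::real) \<Longrightarrow> x powr (-1/2) = 1 / sqrt x"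
  by (simp add: powr_minus_divide powr_half_sqrt[symmetric] powr_minus)

lemma CC_diff: "fst m \<noteq> fst p \<Longrightarrow> CC m p E = 0"
  unfolding CC_eq AA_def by auto

lemma CC_same: "CC m m E = 1"
proof (cases "fst m = 0")
  case True then show ?thesis unfolding CC_eq AA_def BB_def by simp
next
  case False
  let ?s = "2 * real (fst m) + \<bar>E - xi m E\<bar>\<^sup>2"
  have s: "0 < ?s" using False by (simp add: add_pos_nonneg)
  have "AA m E * AA m E + BB m E * BB m E = cc m E * cc m E * ?s"
    using False unfolding AA_def BB_def by (simp add: algebra_simps power2_eq_square)
  also have "\<dots> = 1" unfolding cc_def powr_mhalf[OF s] using s
    by (simp add: field_simps)
  finally show ?thesis unfolding CC_eq by simp
qed

lemma alg:
  fixes a b t E :: real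
  assumes ab: "a * b = t" and apb: "a + b = 2 * E" and t: "t > 0" and E: "E > 0"
  shows "(t + a\<^sup>2) powr (-1/2) * (t + b\<^sup>2) powr (-1/2) * (t + a * b) = sqrt t / E"
proof -
  have a: "a > 0"
  proof (rule ccontr)
    assume "\<not> a > 0"
    then have a0: "a \<le> 0" by simp
    have "b > 0" using apb E a0 by linarith
    then have "a * b \<le> 0" using a0 by (simp add: mult_nonpos_nonneg)
    then show False using ab t by linarith
  qed
  have b: "b > 0"
  proof (rule ccontr)
    assume "\<not> b > 0"
    then have b0: "b \<le> 0" by simp
    have "a > 0" using apb E b0 by linarith
    then have "a * b \<le> 0" using b0 by (simp add: mult_nonneg_nonpos)
    then show False using ab t by linarith
  qed
  have ta: "t + a\<^sup>2 = 2 * E * a"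
  proof -
    have "t + a\<^sup>2 = a * (a + b)" unfolding ab[symmetric] power2_eq_square by (simp only: distrib_left add.commute)
    then show ?thesis unfolding apb by (simp only: mult.commute mult.left_commute)
  qed
  have tb: "t + b\<^sup>2 = 2 * E * b"
  proof -
    have "t + b\<^sup>2 = b * (a + b)" unfolding ab[symmetric] power2_eq_square by (simp only: distrib_left mult.commute)
    then show ?thesis unfolding apb by (simp only: mult.commute mult.left_commute)
  qed
  have p1: "(t + a\<^sup>2) powr (-1/2) = 1 / sqrt (2 * E * a)" unfolding ta using a E by (intro powr_mhalf) simp
  have p2: "(t + b\<^sup>2) powr (-1/2) = 1 / sqrt (2 * E * b)" unfolding tb using b E by (intro powr_mhalf) simp
  have "sqrt (2 * E * a) * sqrt (2 * E * b) = sqrt ((2 * E) * (2 * E) * (a * b))"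
    by (simp only: real_sqrt_mult[symmetric] mult_ac)
  also have "\<dots> = 2 * E * sqrt t" unfolding ab using E by (simp add: real_sqrt_mult)
  finally have sq: "sqrt (2 * E * a) * sqrt (2 * E * b) = 2 * E * sqrt t" .
  have st: "t = sqrt t * sqrt t" using t by simp
  have "(t + a\<^sup>2) powr (-1/2) * (t + b\<^sup>2) powr (-1/2) * (t + a * b) = 2 * t / (2 * E * sqrt t)"
    unfolding p1 p2 ab sq[symmetric] by simp
  also have "\<dots> = sqrt t / E" using E t by (subst st) (simp add: field_simps)
  finally show ?thesis .
qed

lemma CC_pair:
  assumes "fst m = n" "fst p = n" "n \<ge> 1" "E > 0" "xi m E + xi p E = 0" "(xi m E)\<^sup>2 = E\<^sup>2 - 2 * real n"
  shows "CC m p E = of_real (sqrt (2 * real n) / E)"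
proof -
  let ?a = "E - xi m E" and ?b = "E - xi p E" and ?t = "2 * real n"
  have ab: "?a * ?b = ?t"
  proof -
    have "xi p E = - xi m E" using assms(5) by simp
    then have "?a * ?b = E\<^sup>2 - (xi m E)\<^sup>2" by (simp add: power2_eq_square algebra_simps)
    then show ?thesis using assms(6) by simp
  qed
  have apb: "?a + ?b = 2 * E" using assms(5) by simp
  have t: "?t > 0" using assms(3) by simp
  have "AA m E * AA p E + BB m E * BB p E = cc m E * cc p E * (?t + ?a * ?b)"
    using assms(1-3) unfolding AA_def BB_def by (simp add: algebra_simps)
  also have "\<dots> = sqrt ?t / E"
    using alg[OF ab apb t assms(4)] assms(1,2) unfolding cc_def by (simp add: power2_abs)
  finally show ?thesis unfolding CC_eq using assms(1,2) by simp
qed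

lemma cfield_aux: "(F::complex) \<noteq> 0 \<Longrightarrow> \<i> * F / k * (X * (a / F)) = \<i> * a / k * X"
  by (simp add: field_simps)

lemma refl_formula:
  fixes V :: "real \<Rightarrow> real"
  assumes n: "n \<ge> 1" and F: "F > sqrt (2 * real n)"
  defines "k \<equiv> sqrt (F\<^sup>2 - 2 * real n)"
  shows "S_lin (scalar_pot V) F (n, 1) (n, -1)
           = \<i> * complex_of_real (sqrt (2 * real n)) / complex_of_real k * fourier V (2 * k)"
    and "S_lin (scalar_pot V) F (n, -1) (n, 1)
           = \<i> * complex_of_real (sqrt (2 * real n)) / complex_of_real k * fourier V (- 2 * k)"
proof -
  have F0: "F > 0" using F real_sqrt_ge_zero[of "2 * real n"] by linarith
  have "(sqrt (2 * real n))\<^sup>2 < F\<^sup>2" by (rule power_strict_mono[OF F]) auto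
  then have Fn: "F\<^sup>2 > 2 * real n" by simp
  then have k0: "k > 0" unfolding k_def by simp
  have ksq: "k\<^sup>2 = F\<^sup>2 - 2 * real n" unfolding k_def using Fn by simp
  have x1: "xi (n, 1) F = k" and x2: "xi (n, -1) F = - k" using n unfolding xi_def k_def by auto
  have C1: "CC (n, 1) (n, -1) F = of_real (sqrt (2 * real n) / F)"
    by (rule CC_pair) (use n F0 x1 x2 ksq in auto)
  have C2: "CC (n, -1) (n, 1) F = of_real (sqrt (2 * real n) / F)"
    by (rule CC_pair) (use n F0 x1 x2 ksq in auto)
  show "S_lin (scalar_pot V) F (n, 1) (n, -1)
           = \<i> * complex_of_real (sqrt (2 * real n)) / complex_of_real k * fourier V (2 * k)"
  proof -
    have "k - - k = 2 * k" by simp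
    then show ?thesis unfolding S_lin_eq C1 x1 x2 fst_conv k_def[symmetric] of_real_divide
      using F0 by (simp only: cfield_aux of_real_eq_0_iff less_irrefl not_False_eq_True)
  qed
  show "S_lin (scalar_pot V) F (n, -1) (n, 1)
           = \<i> * complex_of_real (sqrt (2 * real n)) / complex_of_real k * fourier V (- 2 * k)"
  proof -
    have "- k - k = - 2 * k" by simp
    then show ?thesis unfolding S_lin_eq C2 x1 x2 fst_conv k_def[symmetric] of_real_divide
      using F0 by (simp only: cfield_aux of_real_eq_0_iff less_irrefl not_False_eq_True)
  qed
qed

lemma refl_det:
  fixes V0 W0 :: "real \<Rightarrow> real"
  assumes n: "n \<ge> 1" and k: "k > 0"
    and hyp: "\<forall>F. F > sqrt (2 * real n) \<longrightarrow>
             S_lin (scalar_pot W0) F (n, 1) (n, -1) = S_lin (scalar_pot V0) F (n, 1) (n, -1)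
           \<and> S_lin (scalar_pot W0) F (n, -1) (n, 1) = S_lin (scalar_pot V0) F (n, -1) (n, 1)"
  shows "fourier W0 (2 * k) = fourier V0 (2 * k) \<and> fourier W0 (- 2 * k) = fourier V0 (- 2 * k)"
proof -
  define F where "F = sqrt (k\<^sup>2 + 2 * real n)"
  have F: "F > sqrt (2 * real n)" unfolding F_def using k by (simp add: real_sqrt_less_mono)
  have F2: "F\<^sup>2 = k\<^sup>2 + 2 * real n" unfolding F_def by (simp add: add_nonneg_nonneg)
  have kk: "sqrt (F\<^sup>2 - 2 * real n) = k" unfolding F2 using k by simp
  have nz: "\<i> * complex_of_real (sqrt (2 * real n)) / complex_of_real k \<noteq> 0" using n k by simp
  have h: "S_lin (scalar_pot W0) F (n, 1) (n, -1) = S_lin (scalar_pot V0) F (n, 1) (n, -1)"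
          "S_lin (scalar_pot W0) F (n, -1) (n, 1) = S_lin (scalar_pot V0) F (n, -1) (n, 1)"
    using hyp F by auto
  note r = refl_formula[OF n F]
  show ?thesis
    using h nz unfolding r kk by simp
qed

theorem mainTheorem6:
  fixes V0 :: "real \<Rightarrow> real" and E :: real and m p :: mode
  assumes "admissible V0"
    and "m \<in> modes_E E" and "p \<in> modes_E E"
  shows
    "(fst m \<noteq> fst p \<longrightarrow> S_lin (scalar_pot V0) E m p = 0)
     \<and> S_lin (scalar_pot V0) E m m
         = \<i> * complex_of_real E / complex_of_real (sqrt (E\<^sup>2 - 2 * real (fst m))) * fourier V0 0
     \<and> (fst m = fst p \<and> fst m \<ge> 1 \<and> E > sqrt (2 * real (fst m)) \<and> snd m \<noteq> snd p \<longrightarrow>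
          (let n = fst m; k = sqrt (E\<^sup>2 - 2 * real n) in
            (LINT y|lborel. cdot2 (phi m E y) (phi p E y)) = complex_of_real (sqrt (2 * real n) / E)
          \<and> sqrt (2 * real n) / E \<noteq> 0
          \<and> (xi m E - xi p E = 2 * k \<or> xi m E - xi p E = - 2 * k)
          \<and> S_lin (scalar_pot V0) E (n, 1) (n, -1)
              = \<i> * complex_of_real (sqrt (2 * real n)) / complex_of_real k * fourier V0 (2 * k)
          \<and> S_lin (scalar_pot V0) E (n, -1) (n, 1)
              = \<i> * complex_of_real (sqrt (2 * real n)) / complex_of_real k * fourier V0 (- 2 * k)))
     \<and> (\<forall>W0. admissible W0 \<and> fourier W0 0 = fourier V0 0 \<longrightarrow>
          (\<forall>F. \<forall>m' \<in> modes_E F. S_lin (scalar_pot W0) F m' m' = S_lin (scalar_pot V0) F m' m'))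
     \<and> (\<forall>n::nat. \<forall>W0. n \<ge> 1 \<and> admissible W0 \<and>
          (\<forall>F. F > sqrt (2 * real n) \<longrightarrow>
             S_lin (scalar_pot W0) F (n, 1) (n, -1) = S_lin (scalar_pot V0) F (n, 1) (n, -1)
           \<and> S_lin (scalar_pot W0) F (n, -1) (n, 1) = S_lin (scalar_pot V0) F (n, -1) (n, 1))
          \<longrightarrow> (\<forall>\<xi>. \<xi> \<noteq> 0 \<longrightarrow> fourier W0 \<xi> = fourier V0 \<xi>))"
proof -
  have P1: "fst m \<noteq> fst p \<longrightarrow> S_lin (scalar_pot V0) E m p = 0"
    unfolding S_lin_eq using CC_diff by simp
  have P2: "S_lin (scalar_pot V0) E m m
         = \<i> * complex_of_real E / complex_of_real (sqrt (E\<^sup>2 - 2 * real (fst m))) * fourier V0 0"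
    unfolding S_lin_eq CC_same by simp
  have P3: "fst m = fst p \<and> fst m \<ge> 1 \<and> E > sqrt (2 * real (fst m)) \<and> snd m \<noteq> snd p \<longrightarrow>
          (let n = fst m; k = sqrt (E\<^sup>2 - 2 * real n) in
            (LINT y|lborel. cdot2 (phi m E y) (phi p E y)) = complex_of_real (sqrt (2 * real n) / E)
          \<and> sqrt (2 * real n) / E \<noteq> 0
          \<and> (xi m E - xi p E = 2 * k \<or> xi m E - xi p E = - 2 * k)
          \<and> S_lin (scalar_pot V0) E (n, 1) (n, -1)
              = \<i> * complex_of_real (sqrt (2 * real n)) / complex_of_real k * fourier V0 (2 * k)
          \<and> S_lin (scalar_pot V0) E (n, -1) (n, 1)
              = \<i> * complex_of_real (sqrt (2 * real n)) / complex_of_real k * fourier V0 (- 2 * k))"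
  proof (intro impI)
    assume H: "fst m = fst p \<and> fst m \<ge> 1 \<and> E > sqrt (2 * real (fst m)) \<and> snd m \<noteq> snd p"
    define n where "n = fst m"
    define k where "k = sqrt (E\<^sup>2 - 2 * real n)"
    have n1: "n \<ge> 1" and En: "E > sqrt (2 * real n)" using H n_def by auto
    have mm: "m \<in> modes" "p \<in> modes" using assms(2,3) unfolding modes_E_def by auto
    have sm: "snd m = 1 \<or> snd m = -1" using mm(1) H by (cases m) (auto simp: modes_def)
    have sp: "snd p = 1 \<or> snd p = -1" using mm(2) H by (cases p) (auto simp: modes_def)
    have mp: "(m = (n, 1) \<and> p = (n, -1)) \<or> (m = (n, -1) \<and> p = (n, 1))"
      using sm sp H n_def by (cases m, cases p) auto
    have E0: "E > 0" using En real_sqrt_ge_zero[of "2 * real n"] by linarith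
    have "(sqrt (2 * real n))\<^sup>2 < E\<^sup>2" by (rule power_strict_mono[OF En]) auto
    then have Fn: "E\<^sup>2 > 2 * real n" by simp
    then have k0: "k > 0" unfolding k_def by simp
    have ksq: "k\<^sup>2 = E\<^sup>2 - 2 * real n" unfolding k_def using Fn by simp
    have x1: "xi (n, 1) E = k" and x2: "xi (n, -1) E = - k" using n1 unfolding xi_def k_def by auto
    have CCmp: "CC m p E = of_real (sqrt (2 * real n) / E)"
      using mp
    proof
      assume "m = (n, 1) \<and> p = (n, -1)"
      then show ?thesis by (intro CC_pair) (use n1 E0 x1 x2 ksq in auto)
    next
      assume "m = (n, -1) \<and> p = (n, 1)"
      then show ?thesis by (intro CC_pair) (use n1 E0 x1 x2 ksq in auto)
    qed
    have xd: "xi m E - xi p E = 2 * k \<or> xi m E - xi p E = - 2 * k"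
      using mp x1 x2 by auto
    have nz: "sqrt (2 * real n) / E \<noteq> 0" using n1 E0 by simp
    note r = refl_formula[OF n1 En, of V0]
    show "let n = fst m; k = sqrt (E\<^sup>2 - 2 * real n) in
            (LINT y|lborel. cdot2 (phi m E y) (phi p E y)) = complex_of_real (sqrt (2 * real n) / E)
          \<and> sqrt (2 * real n) / E \<noteq> 0
          \<and> (xi m E - xi p E = 2 * k \<or> xi m E - xi p E = - 2 * k)
          \<and> S_lin (scalar_pot V0) E (n, 1) (n, -1)
              = \<i> * complex_of_real (sqrt (2 * real n)) / complex_of_real k * fourier V0 (2 * k)
          \<and> S_lin (scalar_pot V0) E (n, -1) (n, 1)
              = \<i> * complex_of_real (sqrt (2 * real n)) / complex_of_real k * fourier V0 (- 2 * k)"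
      unfolding Let_def n_def[symmetric] k_def[symmetric]
      using CCmp[unfolded CC_def] nz xd r[folded k_def] by blast
  qed
  have P4: "\<forall>W0. admissible W0 \<and> fourier W0 0 = fourier V0 0 \<longrightarrow>
          (\<forall>F. \<forall>m' \<in> modes_E F. S_lin (scalar_pot W0) F m' m' = S_lin (scalar_pot V0) F m' m')"
    by (simp add: S_lin_eq)
  have P5: "\<forall>n::nat. \<forall>W0. n \<ge> 1 \<and> admissible W0 \<and>
          (\<forall>F. F > sqrt (2 * real n) \<longrightarrow>
             S_lin (scalar_pot W0) F (n, 1) (n, -1) = S_lin (scalar_pot V0) F (n, 1) (n, -1)
           \<and> S_lin (scalar_pot W0) F (n, -1) (n, 1) = S_lin (scalar_pot V0) F (n, -1) (n, 1))
          \<longrightarrow> (\<forall>\<xi>. \<xi> \<noteq> 0 \<longrightarrow> fourier W0 \<xi> = fourier V0 \<xi>)"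
  proof (intro allI impI)
    fix n :: nat and W0 :: "real \<Rightarrow> real" and \<xi> :: real
    assume A: "n \<ge> 1 \<and> admissible W0 \<and>
          (\<forall>F. F > sqrt (2 * real n) \<longrightarrow>
             S_lin (scalar_pot W0) F (n, 1) (n, -1) = S_lin (scalar_pot V0) F (n, 1) (n, -1)
           \<and> S_lin (scalar_pot W0) F (n, -1) (n, 1) = S_lin (scalar_pot V0) F (n, -1) (n, 1))"
      and x: "\<xi> \<noteq> 0"
    show "fourier W0 \<xi> = fourier V0 \<xi>"
    proof (cases "\<xi> > 0")
      case True
      have "\<xi> / 2 > 0" using True by simp
      from refl_det[OF _ this, of n W0 V0] A have "fourier W0 (2 * (\<xi> / 2)) = fourier V0 (2 * (\<xi> / 2))" by blast
      then show ?thesis by simp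
    next
      case False
      then have "- \<xi> / 2 > 0" using x by simp
      from refl_det[OF _ this, of n W0 V0] A have "fourier W0 (- 2 * (- \<xi> / 2)) = fourier V0 (- 2 * (- \<xi> / 2))" by blast
      then show ?thesis by simp
    qed
  qed
  show ?thesis using P1 P2 P3 P4 P5 by blast
qed

end
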